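(* Let $n\ge 1$ and suppose that the tuples $(Y_i(1),Y_i(0),X_i)$, $i=1,\dots,n$, are drawn IID, with $X_i\in\mathbb{R}^d$ and real-valued potential outcomes with finite means. Let $X=(X_1,\dots,X_n)$ and define $g\in\mathbb{R}^n$ by $g_i=\mathbb{E}[Y_i(1)+Y_i(0)\mid X_i]$. Let $\mathcal{S}\subseteq\{1,\dots,n\}$ be a solution of the problem $$\max_{S\subseteq\{1,\dots,n\}}\ \sum_{i\in S} g_i\quad\text{subject to}\quad \sum_{i\in S} g_i\le \tfrac12\sum_{i=1}^n g_i ,$$ and consider the design in which a single $Z^*\sim\mathrm{Bern}(1/2)$ is drawn independently of the potential outcomes (given $X$) and $Z_i=Z^*$ for $i\in\mathcal{S}$, $Z_i=1-Z^*$ for $i\in\mathcal{S}^c$. Let $\hat\tau_n=\frac{2}{n}\sum_{i=1}^n\big(Y_iZ_i-Y_i(1-Z_i)\big)$ with $Y_i=Y_i(Z_i)$, and $\tau_n=\frac1n\sum_{i=1}^n\mathbb{E}[Y_i(1)-Y_i(0)\mid X_i]$. Suppose that $\sum_{i\in\mathcal{S}}g_i=\sum_{i\in\mathcal{S}^c}g_i$. Then, with $z\in\{0,1\}^n$ defined by $z_i=\mathbb{1}\{i\in\mathcal{S}\}$ and $\mathbf{1}_n$ the all-ones vector, $$\mathbb{E}[\hat\tau_n\mid X,Z=z]=\mathbb{E}[\hat\tau_n\mid X,Z=\mathbf{1}_n-z].$$ Hence $\mathrm{Var}(\mathbb{E}[\hat\tau_n\mid X,Z]\mid X)=0$, and $\mathbb{E}[\hat\tau_n\mid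 X,Z]=\tau_n$ with probability one in $Z$.
   Context: Potential outcomes framework with SUTVA: unit $i$'s observed outcome is $Y_i=Y_i(Z_i)$, where $Z_i\in\{0,1\}$ is the treatment indicator. The treatment vector $Z$ is conditionally independent of all potential outcomes given the covariates $X$, and each $Z_i$ is marginally $\mathrm{Bern}(1/2)$. *)

theory Defs
  imports "HOL-Probability.Probability"
begin

definition gen_sets :: "'a measure \<Rightarrow> ('i \<Rightarrow> 'a \<Rightarrow> 'b) \<Rightarrow> 'b measure \<Rightarrow> 'i set \<Rightarrow> 'a set set" where
  "gen_sets M f N I = (\<Union>i\<in>I. {f i -` A \<inter> space M | A. A \<in> sets N})"

definition sigma_gen :: "'a measure \<Rightarrow> ('i \<Rightarrow> 'a \<Rightarrow> 'b) \<Rightarrow> 'b measure \<Rightarrow> 'i set \<Rightarrow> 'a measure" where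
  "sigma_gen M f N I = sigma (space M) (gen_sets M f N I)"

definition design_Z :: "('a \<Rightarrow> bool) \<Rightarrow> ('a \<Rightarrow> nat set) \<Rightarrow> nat \<Rightarrow> 'a \<Rightarrow> real" where
  "design_Z Zs S i \<omega> = (if Zs \<omega> then of_bool (i \<in> S \<omega>) else 1 - of_bool (i \<in> S \<omega>))"

definition obs_Y :: "(nat \<Rightarrow> 'a \<Rightarrow> real) \<Rightarrow> (nat \<Rightarrow> 'a \<Rightarrow> real) \<Rightarrow> (nat \<Rightarrow> 'a \<Rightarrow> real) \<Rightarrow> nat \<Rightarrow> 'a \<Rightarrow> real" where
  "obs_Y Y1 Y0 Z i \<omega> = (if Z i \<omega> = 1 then Y1 i \<omega> else Y0 i \<omega>)"

definition tau_hat :: "nat \<Rightarrow> (nat \<Rightarrow> 'a \<Rightarrow> real) \<Rightarrow> (nat \<Rightarrow> 'a \<Rightarrow> real) \<Rightarrow> 'a \<Rightarrow> real" where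
  "tau_hat n Y Z \<omega> = 2 / real n * (\<Sum>i=1..n. Y i \<omega> * Z i \<omega> - Y i \<omega> * (1 - Z i \<omega>))"

definition cond_exp_on_event :: "'a measure \<Rightarrow> 'a measure \<Rightarrow> 'a set \<Rightarrow> ('a \<Rightarrow> real) \<Rightarrow> 'a \<Rightarrow> real" where
  "cond_exp_on_event M F A f \<omega> =
     real_cond_exp M F (\<lambda>x. indicator A x * f x) \<omega> / real_cond_exp M F (indicator A) \<omega>"

definition cond_var :: "'a measure \<Rightarrow> 'a measure \<Rightarrow> ('a \<Rightarrow> real) \<Rightarrow> 'a \<Rightarrow> real" where
  "cond_var M F W \<omega> = real_cond_exp M F (\<lambda>x. (W x - real_cond_exp M F W x)\<^sup>2) \<omega>"

end

theory Submission
  imports Defs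
begin


lemma sfs_sigma:
  assumes "prob_space M" "G \<subseteq> sets M"
  shows "sigma_finite_subalgebra M (sigma (space M) G)"
proof -
  have P: "G \<subseteq> Pow (space M)" using assms(2) sets.sets_into_space by blast
  have "subalgebra M (sigma (space M) G)"
    unfolding subalgebra_def using P assms(2)
    by (simp add: sets.sigma_sets_subset space_measure_of_conv)
  then have "finite_measure_subalgebra M (sigma (space M) G)"
    using assms(1) unfolding finite_measure_subalgebra_def finite_measure_subalgebra_axioms_def
    by (simp add: prob_space.finite_measure)
  then show ?thesis by (rule finite_measure_subalgebra_is_sigma_finite)
qed

lemma gen_sets_Pow: "gen_sets M f N I \<subseteq> Pow (space M)"
  unfolding gen_sets_def by auto

lemma gen_sets_sets: "(\<And>i. i \<in> I \<Longrightarrow> f i \<in> measurable M N) \<Longrightarrow> gen_sets M f N I \<subseteq> sets M"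
  unfolding gen_sets_def by auto

lemma space_sigma_gen[simp]: "space (sigma_gen M f N I) = space M"
  unfolding sigma_gen_def using gen_sets_Pow by (simp add: space_measure_of_conv)

lemma sets_sigma_gen: "sets (sigma_gen M f N I) = sigma_sets (space M) (gen_sets M f N I)"
  unfolding sigma_gen_def by (rule sets_measure_of[OF gen_sets_Pow])

lemma indep_int:
  assumes "prob_space M" "prob_space.indep_set M (sets MA) (sets MB)"
    "space MA = space M" "space MB = space M"
    "f \<in> borel_measurable MA" "(g::'a\<Rightarrow>real) \<in> borel_measurable MB"
    "integrable M f" "integrable M g"
  shows "(\<integral>x. f x * g x \<partial>M) = (\<integral>x. f x \<partial>M) * (\<integral>x. g x \<partial>M)"
proof -
  interpret prob_space M by fact
  have "indep_var borel f borel g"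
    unfolding indep_var_def indep_vars_def2
  proof
    show "\<forall>i\<in>UNIV. random_variable (case_bool borel borel i) (case_bool f g i)"
      using assms(7,8) by (auto split: bool.split)
    show "indep_sets (\<lambda>i. {case_bool f g i -` A \<inter> space M |A. A \<in> sets (case_bool borel borel i)}) UNIV"
      using assms(2) unfolding indep_set_def
    proof (rule indep_sets_mono_sets)
      fix i :: bool
      show "{case_bool f g i -` A \<inter> space M |A. A \<in> sets (case_bool borel borel i)} \<subseteq> case_bool (sets MA) (sets MB) i"
      proof (cases i)
        case True
        have "f -` A \<inter> space M \<in> sets MA" if "A \<in> sets borel" for A
          using measurable_sets[OF assms(5) that] assms(3) by simp
        then show ?thesis using True by auto
      next
        case False
        have "g -` A \<inter> space M \<in> sets MB" if "A \<in> sets borel" for A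
          using measurable_sets[OF assms(6) that] assms(4) by simp
        then show ?thesis using False by auto
      qed
    qed
  qed
  then show ?thesis using indep_var_lebesgue_integral assms(7,8) by blast
qed

lemma rce_nonneg_F:
  assumes "sigma_finite_subalgebra M F" "h \<in> borel_measurable M" "c \<in> borel_measurable F"
    "AE x in M. h x = c x" "\<And>x. h x \<ge> 0" "\<And>x. c x \<ge> 0"
  shows "AE x in M. real_cond_exp M F h x = c x"
proof -
  interpret sigma_finite_subalgebra M F by fact
  have cM: "c \<in> borel_measurable M" using assms(3) measurable_from_subalg subalg by blast
  have 1: "AE x in M. nn_cond_exp M F (\<lambda>x. ennreal (h x)) x = nn_cond_exp M F (\<lambda>x. ennreal (c x)) x"
    by (rule nn_cond_exp_cong) (use assms(4) assms(2) cM in auto)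
  have 2: "AE x in M. ennreal (c x) = nn_cond_exp M F (\<lambda>x. ennreal (c x)) x"
    by (rule nn_cond_exp_F_meas) (use assms(3) in measurable)
  have 3: "AE x in M. (\<lambda>x. 0) x = nn_cond_exp M F (\<lambda>x. 0) x"
    by (rule nn_cond_exp_F_meas) simp
  have e: "(\<lambda>x. ennreal (- h x)) = (\<lambda>x. 0)" using assms(5) by (auto intro!: ext ennreal_neg)
  show ?thesis using 1 2 3 unfolding real_cond_exp_def e
    by eventually_elim (metis assms(6) enn2real_ennreal enn2real_0 diff_zero)
qed

lemma snd_snd_borel: "(\<lambda>p::real \<times> real \<times> (real ^ 'd). snd (snd p)) \<in> borel_measurable borel"
  by (intro borel_measurable_continuous_onI continuous_intros)

lemma key:
  fixes Y1 Y0 :: "nat \<Rightarrow> 'a \<Rightarrow> real" and X :: "nat \<Rightarrow> 'a \<Rightarrow> real ^ 'd"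
  assumes PS: "prob_space M"
    and IV: "prob_space.indep_vars M (\<lambda>_. borel) (\<lambda>i \<omega>. (Y1 i \<omega>, Y0 i \<omega>, X i \<omega>)) I"
    and iI: "i \<in> I"
    and fi: "integrable M f"
    and fm: "f \<in> borel_measurable (vimage_algebra (space M) (\<lambda>\<omega>. (Y1 i \<omega>, Y0 i \<omega>, X i \<omega>)) borel)"
  shows "AE x in M. real_cond_exp M (sigma_gen M X borel I) f x = real_cond_exp M (sigma_gen M X borel {i}) f x"
proof -
  interpret prob_space M by fact
  define V where "V = (\<lambda>i \<omega>. (Y1 i \<omega>, Y0 i \<omega>, X i \<omega>))"
  define E where "E = (\<lambda>j. {V j -` A \<inter> space M | A. A \<in> sets (borel :: (real \<times> real \<times> (real ^ 'd)) measure)})"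
  have rv: "\<And>j. j \<in> I \<Longrightarrow> V j \<in> borel_measurable M" and ind: "indep_sets E I"
    using IV unfolding indep_vars_def2 V_def E_def by auto
  have Xm: "X j \<in> borel_measurable M" if "j \<in> I" for j
  proof -
    have "(\<lambda>\<omega>. snd (snd (V j \<omega>))) \<in> borel_measurable M"
      using measurable_compose[OF rv[OF that] snd_snd_borel] by (simp add: comp_def)
    then show ?thesis by (simp add: V_def)
  qed
  define FI where "FI = sigma_gen M X borel I"
  define Fi where "Fi = sigma_gen M X borel {i}"
  define Fr where "Fr = sigma_gen M X borel (I - {i})"
  define VA where "VA = vimage_algebra (space M) (V i) borel"
  have gI: "gen_sets M X borel I \<subseteq> sets M" by (rule gen_sets_sets) (use Xm in auto)
  have gi: "gen_sets M X borel {i} \<subseteq> sets M" by (rule gen_sets_sets) (use Xm iI in auto)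
  have gr: "gen_sets M X borel (I - {i}) \<subseteq> sets M" by (rule gen_sets_sets) (use Xm in auto)
  have sFI: "sigma_finite_subalgebra M FI" unfolding FI_def sigma_gen_def by (rule sfs_sigma[OF PS gI])
  have sFi: "sigma_finite_subalgebra M Fi" unfolding Fi_def sigma_gen_def by (rule sfs_sigma[OF PS gi])
  have FiM: "sets Fi \<subseteq> sets M" using gi unfolding Fi_def sets_sigma_gen by (rule sets.sigma_sets_subset)
  have FrM: "sets Fr \<subseteq> sets M" using gr unfolding Fr_def sets_sigma_gen by (rule sets.sigma_sets_subset)
  have FiFI: "sets Fi \<subseteq> sets FI" unfolding Fi_def FI_def sets_sigma_gen
    by (rule sigma_sets_subseteq) (use iI in \<open>auto simp: gen_sets_def\<close>)
  have sVA: "sets VA = sigma_sets (space M) (E i)"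
    unfolding VA_def E_def by (simp add: sets_vimage_algebra)
  have XE: "X j -` A \<inter> space M \<in> E j" if "A \<in> sets borel" for j A
  proof -
    have "(\<lambda>p::real \<times> real \<times> (real ^ 'd). snd (snd p)) -` A \<inter> space borel \<in> sets borel"
      using measurable_sets[OF snd_snd_borel that] .
    then show ?thesis unfolding E_def V_def by (intro CollectI exI[of _ "(\<lambda>p::real \<times> real \<times> (real ^ 'd). snd (snd p)) -` A"]) auto
  qed
  have FiVA: "sets Fi \<subseteq> sets VA" unfolding Fi_def sets_sigma_gen sVA
    by (rule sigma_sets_subseteq) (auto simp: gen_sets_def XE)
  have indep: "indep_set (sets VA) (sets Fr)"
  proof -
    have "indep_sets (\<lambda>b. sigma_sets (space M) (\<Union>j\<in>(case b of True \<Rightarrow> {i} | False \<Rightarrow> I - {i}). E j)) UNIV"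
    proof (rule indep_sets_collect_sigma)
      have "(\<Union>b\<in>UNIV. case b of True \<Rightarrow> {i} | False \<Rightarrow> I - {i}) = I"
        using iI by (auto simp: UNIV_bool)
      then show "indep_sets E (\<Union>b\<in>UNIV. case b of True \<Rightarrow> {i} | False \<Rightarrow> I - {i})" using ind by simp
      show "Int_stable (E j)" for j
      proof (rule Int_stableI)
        fix x y assume "x \<in> E j" "y \<in> E j"
        then obtain A B where "A \<in> sets borel" "B \<in> sets borel" "x = V j -` A \<inter> space M" "y = V j -` B \<inter> space M"
          unfolding E_def by auto
        then show "x \<inter> y \<in> E j" unfolding E_def by (intro CollectI exI[of _ "A \<inter> B"]) auto
      qed
      show "disjoint_family_on (\<lambda>b. case b of True \<Rightarrow> {i} | False \<Rightarrow> I - {i}) UNIV"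
        unfolding disjoint_family_on_def by (auto split: bool.split)
    qed
    then show ?thesis unfolding indep_set_def
    proof (rule indep_sets_mono_sets)
      fix b :: bool
      show "case_bool (sets VA) (sets Fr) b \<subseteq> sigma_sets (space M) (\<Union>j\<in>(case b of True \<Rightarrow> {i} | False \<Rightarrow> I - {i}). E j)"
      proof (cases b)
        case True then show ?thesis using sVA by simp
      next
        case False
        have "sets Fr \<subseteq> sigma_sets (space M) (\<Union>j\<in>I - {i}. E j)"
          unfolding Fr_def sets_sigma_gen
          by (rule sigma_sets_subseteq) (auto simp: gen_sets_def XE)
        then show ?thesis using False by simp
      qed
    qed
  qed
  define g where "g = real_cond_exp M Fi f"
  have gint: "integrable M g" unfolding g_def using sigma_finite_subalgebra.real_cond_exp_int(1)[OF sFi fi] .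
  have gFi: "g \<in> borel_measurable Fi" unfolding g_def by simp
  have gFI: "g \<in> borel_measurable FI"
    by (rule measurable_from_subalg[OF _ gFi]) (use FiFI in \<open>auto simp: subalgebra_def FI_def Fi_def\<close>)
  have subVA: "subalgebra VA Fi" using FiVA by (auto simp: subalgebra_def VA_def Fi_def)
  have gVA: "g \<in> borel_measurable VA" by (rule measurable_from_subalg[OF subVA gFi])
  have fVA: "f \<in> borel_measurable VA" using fm unfolding VA_def V_def .
  define G where "G = {a \<inter> b | a b. a \<in> sets Fi \<and> b \<in> sets Fr}"
  have spFi: "space Fi = space M" "space Fr = space M" "space VA = space M" "space FI = space M"
    by (auto simp: Fi_def Fr_def VA_def FI_def)
  have GM: "G \<subseteq> sets M" unfolding G_def using FiM FrM by auto
  have GP: "G \<subseteq> Pow (space M)" using GM sets.sets_into_space by blast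
  have FIG: "sets FI = sigma_sets (space M) G"
    unfolding FI_def sets_sigma_gen
  proof (rule sigma_sets_eqI)
    fix a assume "a \<in> gen_sets M X borel I"
    then obtain j A where j: "j \<in> I" "A \<in> sets borel" "a = X j -` A \<inter> space M" unfolding gen_sets_def by auto
    have aM: "a \<subseteq> space M" using j by auto
    show "a \<in> sigma_sets (space M) G"
    proof (cases "j = i")
      case True
      have "a \<in> sets Fi" unfolding Fi_def sets_sigma_gen using j True by (auto simp: gen_sets_def)
      moreover have "space M \<in> sets Fr" using sets.top[of Fr] spFi by simp
      ultimately have "a \<inter> space M \<in> G" unfolding G_def by blast
      then show ?thesis using aM by (simp add: Int_absorb2)
    next
      case False
      have "a \<in> sets Fr" unfolding Fr_def sets_sigma_gen using j False by (auto simp: gen_sets_def)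
      moreover have "space M \<in> sets Fi" using sets.top[of Fi] spFi by simp
      ultimately have "space M \<inter> a \<in> G" unfolding G_def by blast
      then show ?thesis using aM by (simp add: Int_absorb1)
    qed
  next
    fix b assume "b \<in> G"
    then obtain a c where ac: "a \<in> sets Fi" "c \<in> sets Fr" "b = a \<inter> c" unfolding G_def by auto
    have "sets Fi \<subseteq> sigma_sets (space M) (gen_sets M X borel I)"
      unfolding Fi_def sets_sigma_gen by (rule sigma_sets_subseteq) (use iI in \<open>auto simp: gen_sets_def\<close>)
    moreover have "sets Fr \<subseteq> sigma_sets (space M) (gen_sets M X borel I)"
      unfolding Fr_def sets_sigma_gen by (rule sigma_sets_subseteq) (auto simp: gen_sets_def)
    ultimately have "a \<in> sigma_sets (space M) (gen_sets M X borel I)" "c \<in> sigma_sets (space M) (gen_sets M X borel I)"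
      using ac(1,2) by blast+
    then show "b \<in> sigma_sets (space M) (gen_sets M X borel I)" unfolding ac(3) using sets.Int[of a "sigma_gen M X borel I" c] unfolding sets_sigma_gen by blast
  qed
  have sGM: "sigma_sets (space M) G \<subseteq> sets M" using GM by (rule sets.sigma_sets_subset)
  have main: "set_lebesgue_integral M A f = set_lebesgue_integral M A g" if A: "A \<in> sets FI" for A
  proof -
    have AG: "A \<in> sigma_sets (space M) G" using A FIG by simp
    have Gst: "Int_stable G"
    proof (rule Int_stableI)
      fix x y assume "x \<in> G" "y \<in> G"
      then obtain a b a' b' where "a \<in> sets Fi" "b \<in> sets Fr" "a' \<in> sets Fi" "b' \<in> sets Fr"
        "x = a \<inter> b" "y = a' \<inter> b'" unfolding G_def by auto
      then show "x \<inter> y \<in> G" unfolding G_def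
        by (intro CollectI exI[of _ "a \<inter> a'"] exI[of _ "b \<inter> b'"]) auto
    qed
    from Gst GP AG show ?thesis
    proof (induction rule: sigma_sets_induct_disjoint)
      case (basic A)
      then obtain a b where ab: "a \<in> sets Fi" "b \<in> sets Fr" "A = a \<inter> b" unfolding G_def by auto
      have aM: "a \<in> sets M" "b \<in> sets M" using ab FiM FrM by auto
      have aVA: "a \<in> sets VA" using ab FiVA by auto
      have e: "set_lebesgue_integral M A h = (\<integral>x. (indicator a x * h x) * indicator b x \<partial>M)" for h :: "'a \<Rightarrow> real"
        unfolding set_lebesgue_integral_def ab by (intro Bochner_Integration.integral_cong) (auto simp: indicator_def)
      have i1: "(\<integral>x. (indicator a x * h x) * indicator b x \<partial>M) = (\<integral>x. indicator a x * h x \<partial>M) * (\<integral>x. indicator b x \<partial>M)"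
        if "h \<in> borel_measurable VA" "integrable M h" for h :: "'a \<Rightarrow> real"
      proof (rule indep_int[OF PS indep spFi(3) spFi(2)])
        show "(\<lambda>x. indicator a x * h x) \<in> borel_measurable VA"
          by (rule borel_measurable_times[OF borel_measurable_indicator[OF aVA] that(1)])
        show "(indicator b :: 'a \<Rightarrow> real) \<in> borel_measurable Fr"
          by (rule borel_measurable_indicator[OF ab(2)])
        show "integrable M (\<lambda>x. indicator a x * h x)" using integrable_mult_indicator[OF aM(1) that(2)] by simp
        show "integrable M (indicator b :: 'a \<Rightarrow> real)"
          by (rule integrable_real_indicator[OF aM(2)]) (simp add: less_top[symmetric])
      qed
      have "(\<integral>x. indicator a x * f x \<partial>M) = (\<integral>x. indicator a x * g x \<partial>M)"
        using sigma_finite_subalgebra.real_cond_exp_intA[OF sFi fi ab(1)]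
        unfolding g_def set_lebesgue_integral_def by simp
      then show ?case unfolding e using i1[OF fVA fi] i1[OF gVA gint] by simp
    next
      case empty then show ?case by (simp add: set_lebesgue_integral_def)
    next
      case (compl A)
      have AM: "A \<in> sets M" using compl(1) sGM by auto
      have e: "set_lebesgue_integral M (space M - A) h = (\<integral>x. h x \<partial>M) - set_lebesgue_integral M A h"
        if "integrable M h" for h :: "'a \<Rightarrow> real"
      proof -
        have "set_lebesgue_integral M (space M - A) h = (\<integral>x. h x - indicator A x * h x \<partial>M)"
          unfolding set_lebesgue_integral_def by (intro Bochner_Integration.integral_cong) (auto simp: indicator_def)
        also have "\<dots> = (\<integral>x. h x \<partial>M) - (\<integral>x. indicator A x * h x \<partial>M)"
          by (rule Bochner_Integration.integral_diff[OF that]) (use integrable_mult_indicator[OF AM that] in simp)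
        finally show ?thesis unfolding set_lebesgue_integral_def by simp
      qed
      have "(\<integral>x. f x \<partial>M) = (\<integral>x. g x \<partial>M)"
        using sigma_finite_subalgebra.real_cond_exp_int(2)[OF sFi fi] unfolding g_def by simp
      then show ?case using e[OF fi] e[OF gint] compl(2) by simp
    next
      case (union A)
      have AM: "\<And>k. A k \<in> sets M" using union(2) sGM by auto
      have UM: "(\<Union>k. A k) \<in> sets M" using AM by auto
      have dj: "\<And>k l. k \<noteq> l \<Longrightarrow> A k \<inter> A l = {}" using union(1) unfolding disjoint_family_on_def by auto
      have c: "set_lebesgue_integral M (\<Union>k. A k) h = (\<Sum>k. set_lebesgue_integral M (A k) h)"
        if "integrable M h" for h :: "'a \<Rightarrow> real"
        by (rule lebesgue_integral_countable_add[OF AM], use dj in blast,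
            unfold set_integrable_def, rule integrable_mult_indicator[OF UM that])
      show ?case using c[OF fi] c[OF gint] union(3) by simp
    qed
  qed
  have "AE x in M. real_cond_exp M FI f x = g x"
    by (rule sigma_finite_subalgebra.real_cond_exp_charact[OF sFI main fi gint gFI])
  then show ?thesis unfolding g_def FI_def Fi_def .
qed



lemma indep_mul:
  assumes PS: "prob_space M"
    and ind: "prob_space.indep_set M (sets ZA) (sets N)" and sp: "space ZA = space M" "space N = space M"
    and Z: "Z \<in> sets ZA" and A: "A \<in> sets N" and hi: "integrable M h" and hN: "h \<in> borel_measurable N"
  shows "(\<integral>x. indicator Z x * (indicator A x * h x) \<partial>M) = measure M Z * (\<integral>x. indicator A x * h x \<partial>M)"
proof -
  interpret prob_space M by fact
  have ZM: "sets ZA \<subseteq> sets M" "sets N \<subseteq> sets M" using ind indep_sets2_eq by auto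
  have ZM': "Z \<in> sets M" "A \<in> sets M" using Z A ZM by auto
  have "(\<integral>x. indicator Z x * (indicator A x * h x) \<partial>M) = (\<integral>x. indicator Z x \<partial>M) * (\<integral>x. indicator A x * h x \<partial>M)"
  proof (rule indep_int[OF PS ind sp])
    show "(indicator Z :: 'a \<Rightarrow> real) \<in> borel_measurable ZA" by (rule borel_measurable_indicator[OF Z])
    show "(\<lambda>x. indicator A x * h x) \<in> borel_measurable N"
      by (rule borel_measurable_times[OF borel_measurable_indicator[OF A] hN])
    show "integrable M (indicator Z :: 'a \<Rightarrow> real)"
      by (rule integrable_real_indicator[OF ZM'(1)]) (simp add: less_top[symmetric])
    show "integrable M (\<lambda>x. indicator A x * h x)" using integrable_mult_indicator[OF ZM'(2) hi] by simp
  qed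
  also have "(\<integral>x. indicator Z x \<partial>M) = measure M Z"
    using ZM'(1) sets.sets_into_space by (simp add: Int_absorb2)
  finally show ?thesis .
qed

lemma indep_cond:
  assumes PS: "prob_space M" and sF: "sigma_finite_subalgebra M F"
    and ind: "prob_space.indep_set M (sets ZA) (sets N)" and sp: "space ZA = space M" "space N = space M"
    and FN: "sets F \<subseteq> sets N" and Z: "Z \<in> sets ZA" and hi: "integrable M h" and hN: "h \<in> borel_measurable N"
  shows "AE x in M. real_cond_exp M F (\<lambda>x. indicator Z x * h x) x = measure M Z * real_cond_exp M F h x"
proof -
  interpret prob_space M by fact
  interpret sigma_finite_subalgebra M F by fact
  have ZM: "Z \<in> sets M" using ind indep_sets2_eq Z by auto
  show ?thesis
  proof (rule real_cond_exp_charact)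
    fix A assume A: "A \<in> sets F"
    have AN: "A \<in> sets N" using A FN by auto
    have "set_lebesgue_integral M A (\<lambda>x. indicator Z x * h x) = (\<integral>x. indicator Z x * (indicator A x * h x) \<partial>M)"
      unfolding set_lebesgue_integral_def by (simp add: mult.assoc mult.left_commute)
    also have "\<dots> = measure M Z * (\<integral>x. indicator A x * h x \<partial>M)" by (rule indep_mul[OF PS ind sp Z AN hi hN])
    also have "\<dots> = measure M Z * (\<integral>x. indicator A x * real_cond_exp M F h x \<partial>M)"
      using real_cond_exp_intA[OF hi A] unfolding set_lebesgue_integral_def by simp
    also have "\<dots> = (\<integral>x. measure M Z * (indicator A x * real_cond_exp M F h x) \<partial>M)" by (rule integral_mult_right_zero[symmetric])
    also have "\<dots> = set_lebesgue_integral M A (\<lambda>x. measure M Z * real_cond_exp M F h x)"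
      unfolding set_lebesgue_integral_def by (intro Bochner_Integration.integral_cong) auto
    finally show "set_lebesgue_integral M A (\<lambda>x. indicator Z x * h x) =
        set_lebesgue_integral M A (\<lambda>x. measure M Z * real_cond_exp M F h x)" .
  next
    show "integrable M (\<lambda>x. indicator Z x * h x)" using integrable_mult_indicator[OF ZM hi] by simp
    show "integrable M (\<lambda>x. measure M Z * real_cond_exp M F h x)" using real_cond_exp_int(1)[OF hi] by simp
    show "(\<lambda>x. measure M Z * real_cond_exp M F h x) \<in> borel_measurable F" by simp
  qed
qed

lemma rce_lin:
  fixes a b p q :: "nat \<Rightarrow> 'a \<Rightarrow> real"
  assumes sF: "sigma_finite_subalgebra M F" and fin: "finite I"
    and aF: "\<And>i. i \<in> I \<Longrightarrow> a i \<in> borel_measurable F" and bF: "\<And>i. i \<in> I \<Longrightarrow> b i \<in> borel_measurable F"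
    and pM: "\<And>i. i \<in> I \<Longrightarrow> p i \<in> borel_measurable M" and qM: "\<And>i. i \<in> I \<Longrightarrow> q i \<in> borel_measurable M"
    and api: "\<And>i. i \<in> I \<Longrightarrow> integrable M (\<lambda>x. a i x * p i x)"
    and bqi: "\<And>i. i \<in> I \<Longrightarrow> integrable M (\<lambda>x. b i x * q i x)"
  shows "AE x in M. real_cond_exp M F (\<lambda>x. c * (\<Sum>i\<in>I. a i x * p i x - b i x * q i x)) x
     = c * (\<Sum>i\<in>I. a i x * real_cond_exp M F (p i) x - b i x * real_cond_exp M F (q i) x)"
proof -
  interpret sigma_finite_subalgebra M F by fact
  define u where "u = (\<lambda>i. if i \<in> I then (\<lambda>x. a i x * p i x - b i x * q i x) else (\<lambda>x. 0))"
  have ui: "integrable M (u i)" for i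
    unfolding u_def using api bqi by auto
  have eq: "(\<lambda>x. c * (\<Sum>i\<in>I. a i x * p i x - b i x * q i x)) = (\<lambda>x. c * (\<Sum>i\<in>I. u i x))"
    unfolding u_def by (intro ext arg_cong[where f="\<lambda>t. c * t"] sum.cong) auto
  have sint: "integrable M (\<lambda>x. \<Sum>i\<in>I. u i x)" using ui by auto
  have A1: "AE x in M. real_cond_exp M F (\<lambda>x. c * (\<Sum>i\<in>I. u i x)) x = c * real_cond_exp M F (\<lambda>x. \<Sum>i\<in>I. u i x) x"
    by (rule real_cond_exp_cmult[OF sint])
  have A2: "AE x in M. real_cond_exp M F (\<lambda>x. \<Sum>i\<in>I. u i x) x = (\<Sum>i\<in>I. real_cond_exp M F (u i) x)"
    by (rule real_cond_exp_sum[OF ui])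
  have A3: "AE x in M. \<forall>i\<in>I. real_cond_exp M F (u i) x = a i x * real_cond_exp M F (p i) x - b i x * real_cond_exp M F (q i) x"
  proof (subst AE_finite_all[OF fin], intro ballI)
    fix i assume i: "i \<in> I"
    have ue: "u i = (\<lambda>x. a i x * p i x - b i x * q i x)" unfolding u_def using i by simp
    have d: "AE x in M. real_cond_exp M F (\<lambda>x. a i x * p i x - b i x * q i x) x
        = real_cond_exp M F (\<lambda>x. a i x * p i x) x - real_cond_exp M F (\<lambda>x. b i x * q i x) x"
      by (rule real_cond_exp_diff[OF api[OF i] bqi[OF i]])
    have m1: "AE x in M. real_cond_exp M F (\<lambda>x. a i x * p i x) x = a i x * real_cond_exp M F (p i) x"
      by (rule real_cond_exp_mult[OF aF[OF i] pM[OF i] api[OF i]])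
    have m2: "AE x in M. real_cond_exp M F (\<lambda>x. b i x * q i x) x = b i x * real_cond_exp M F (q i) x"
      by (rule real_cond_exp_mult[OF bF[OF i] qM[OF i] bqi[OF i]])
    show "AE x in M. real_cond_exp M F (u i) x = a i x * real_cond_exp M F (p i) x - b i x * real_cond_exp M F (q i) x"
      using d m1 m2 unfolding ue by eventually_elim simp
  qed
  show ?thesis unfolding eq using A1 A2 A3
  proof eventually_elim
    case (elim x)
    have "(\<Sum>i\<in>I. real_cond_exp M F (u i) x) = (\<Sum>i\<in>I. a i x * real_cond_exp M F (p i) x - b i x * real_cond_exp M F (q i) x)"
      using elim(3) by (intro sum.cong) auto
    then show ?case using elim(1,2) by simp
  qed
qed

lemma meas_lin:
  fixes a b p q :: "nat \<Rightarrow> 'a \<Rightarrow> real"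
  assumes "\<And>i. i \<in> I \<Longrightarrow> a i \<in> borel_measurable N" "\<And>i. i \<in> I \<Longrightarrow> b i \<in> borel_measurable N"
    "\<And>i. i \<in> I \<Longrightarrow> p i \<in> borel_measurable N" "\<And>i. i \<in> I \<Longrightarrow> q i \<in> borel_measurable N"
  shows "(\<lambda>\<omega>. c * (\<Sum>i\<in>I. a i \<omega> * p i \<omega> - b i \<omega> * q i \<omega>)) \<in> borel_measurable N"
proof -
  have "(\<lambda>\<omega>. a i \<omega> * p i \<omega> - b i \<omega> * q i \<omega>) \<in> borel_measurable N" if "i \<in> I" for i
    using assms[OF that] by measurable
  then have "(\<lambda>\<omega>. \<Sum>i\<in>I. a i \<omega> * p i \<omega> - b i \<omega> * q i \<omega>) \<in> borel_measurable N"
    by (rule borel_measurable_sum)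
  then show ?thesis by measurable
qed
lemma int_lin:
  fixes a b p q :: "nat \<Rightarrow> 'a \<Rightarrow> real"
  assumes "\<And>i. i \<in> I \<Longrightarrow> integrable M (\<lambda>\<omega>. a i \<omega> * p i \<omega>)"
    "\<And>i. i \<in> I \<Longrightarrow> integrable M (\<lambda>\<omega>. b i \<omega> * q i \<omega>)"
  shows "integrable M (\<lambda>\<omega>. c * (\<Sum>i\<in>I. a i \<omega> * p i \<omega> - b i \<omega> * q i \<omega>))"
proof -
  have "integrable M (\<lambda>\<omega>. a i \<omega> * p i \<omega> - b i \<omega> * q i \<omega>)" if "i \<in> I" for i
    by (rule Bochner_Integration.integrable_diff[OF assms(1)[OF that] assms(2)[OF that]])
  then have "integrable M (\<lambda>\<omega>. \<Sum>i\<in>I. a i \<omega> * p i \<omega> - b i \<omega> * q i \<omega>)"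
    by (rule Bochner_Integration.integrable_sum)
  then show ?thesis by (rule Bochner_Integration.integrable_mult_right)
qed

lemma aux_div:
  fixes a b c :: real assumes "a * 2 = c" "b * 2 = 1" shows "a / b = c"
proof -
  have hb: "b = 1/2" using assms(2) by simp
  show ?thesis unfolding hb using assms(1) by simp
qed

lemma alg:
  fixes a b :: "nat \<Rightarrow> real"
  assumes fin: "finite I" and SI: "S \<subseteq> I" and bal: "(\<Sum>i\<in>S. a i + b i) = (\<Sum>i\<in>I - S. a i + b i)"
  shows "(\<Sum>i\<in>I. (if i \<in> S then 1 else 0) * a i - (if i \<in> S then 0 else 1) * b i)
       = (\<Sum>i\<in>I. (if i \<in> S then 0 else 1) * a i - (if i \<in> S then 1 else 0) * b i)" (is ?A)
    and "2 * (\<Sum>i\<in>I. (if i \<in> S then 1 else 0) * a i - (if i \<in> S then 0 else 1) * b i) = (\<Sum>i\<in>I. a i - b i)" (is ?B)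
proof -
  have split: "(\<Sum>i\<in>I. f i) = (\<Sum>i\<in>S. f i) + (\<Sum>i\<in>I - S. f i)" for f :: "nat \<Rightarrow> real"
    using sum.subset_diff[OF SI fin, of f] by simp
  have finS: "finite S" using fin SI finite_subset by blast
  have e1: "(\<Sum>i\<in>I. (if i \<in> S then 1 else 0) * a i - (if i \<in> S then 0 else 1) * b i) = (\<Sum>i\<in>S. a i) - (\<Sum>i\<in>I - S. b i)"
  proof -
    have "(\<Sum>i\<in>S. (if i \<in> S then 1 else 0) * a i - (if i \<in> S then 0 else 1) * b i) = (\<Sum>i\<in>S. a i)"
      by (rule sum.cong) auto
    moreover have "(\<Sum>i\<in>I - S. (if i \<in> S then 1 else 0) * a i - (if i \<in> S then 0 else 1) * b i) = (\<Sum>i\<in>I - S. - b i)"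
      by (rule sum.cong) auto
    ultimately show ?thesis using split by (simp add: sum_negf)
  qed
  have e2: "(\<Sum>i\<in>I. (if i \<in> S then 0 else 1) * a i - (if i \<in> S then 1 else 0) * b i) = (\<Sum>i\<in>I - S. a i) - (\<Sum>i\<in>S. b i)"
  proof -
    have "(\<Sum>i\<in>S. (if i \<in> S then 0 else 1) * a i - (if i \<in> S then 1 else 0) * b i) = (\<Sum>i\<in>S. - b i)"
      by (rule sum.cong) auto
    moreover have "(\<Sum>i\<in>I - S. (if i \<in> S then 0 else 1) * a i - (if i \<in> S then 1 else 0) * b i) = (\<Sum>i\<in>I - S. a i)"
      by (rule sum.cong) auto
    ultimately show ?thesis using split by (simp add: sum_negf)
  qed
  have bal': "(\<Sum>i\<in>S. a i) + (\<Sum>i\<in>S. b i) = (\<Sum>i\<in>I - S. a i) + (\<Sum>i\<in>I - S. b i)"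
    using bal by (simp add: sum.distrib)
  have e3: "(\<Sum>i\<in>I. a i - b i) = (\<Sum>i\<in>S. a i) + (\<Sum>i\<in>I - S. a i) - (\<Sum>i\<in>S. b i) - (\<Sum>i\<in>I - S. b i)"
    using split[of a] split[of b] by (simp add: sum_subtractf)
  show ?A using e1 e2 bal' by linarith
  show ?B using e1 e3 bal' by linarith
qed



theorem proposition1:
  fixes M :: "'a measure" and n :: nat
    and Y1 Y0 :: "nat \<Rightarrow> 'a \<Rightarrow> real" and X :: "nat \<Rightarrow> 'a \<Rightarrow> real ^ 'd"
    and Zs :: "'a \<Rightarrow> bool" and S :: "'a \<Rightarrow> nat set"
  defines "g \<equiv> \<lambda>i. real_cond_exp M (sigma_gen M X borel {i}) (\<lambda>\<omega>. Y1 i \<omega> + Y0 i \<omega>)"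
    and "FX \<equiv> sigma_gen M X borel {1..n}"
    and "FXZ \<equiv> sigma (space M) (gen_sets M X borel {1..n} \<union> gen_sets M (design_Z Zs S) borel {1..n})"
    and "tauhat \<equiv> tau_hat n (obs_Y Y1 Y0 (design_Z Zs S)) (design_Z Zs S)"
    and "tau \<equiv> \<lambda>\<omega>. 1 / real n * (\<Sum>i=1..n. real_cond_exp M (sigma_gen M X borel {i}) (\<lambda>\<omega>. Y1 i \<omega> - Y0 i \<omega>) \<omega>)"
    and "Ez \<equiv> {\<omega> \<in> space M. \<forall>i\<in>{1..n}. design_Z Zs S i \<omega> = of_bool (i \<in> S \<omega>)}"
    and "Ez' \<equiv> {\<omega> \<in> space M. \<forall>i\<in>{1..n}. design_Z Zs S i \<omega> = 1 - of_bool (i \<in> S \<omega>)}"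
  assumes "prob_space M"
    and "n \<ge> 1"
    and iid_indep: "prob_space.indep_vars M (\<lambda>_. borel) (\<lambda>i \<omega>. (Y1 i \<omega>, Y0 i \<omega>, X i \<omega>)) {1..n}"
    and iid_ident: "\<forall>i\<in>{1..n}. distr M borel (\<lambda>\<omega>. (Y1 i \<omega>, Y0 i \<omega>, X i \<omega>))
                              = distr M borel (\<lambda>\<omega>. (Y1 1 \<omega>, Y0 1 \<omega>, X 1 \<omega>))"
    and finite_means: "\<forall>i\<in>{1..n}. integrable M (Y1 i) \<and> integrable M (Y0 i)"
    and Zs_indep: "prob_space.indep_set M (sets (vimage_algebra (space M) Zs (count_space UNIV)))
                     (sets (vimage_algebra (space M)
                        (\<lambda>\<omega>. \<lambda>i\<in>{1..n}. (Y1 i \<omega>, Y0 i \<omega>, X i \<omega>)) (PiM {1..n} (\<lambda>_. borel))))"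
    and Zs_bern: "measure M {\<omega> \<in> space M. Zs \<omega>} = 1 / 2"
    and S_meas: "\<forall>i\<in>{1..n}. {\<omega> \<in> space M. i \<in> S \<omega>} \<in> sets FX"
    and S_opt: "\<forall>\<omega>\<in>space M. S \<omega> \<subseteq> {1..n}
                  \<and> (\<Sum>i\<in>S \<omega>. g i \<omega>) \<le> 1 / 2 * (\<Sum>i=1..n. g i \<omega>)
                  \<and> (\<forall>T \<subseteq> {1..n}. (\<Sum>i\<in>T. g i \<omega>) \<le> 1 / 2 * (\<Sum>i=1..n. g i \<omega>)
                         \<longrightarrow> (\<Sum>i\<in>T. g i \<omega>) \<le> (\<Sum>i\<in>S \<omega>. g i \<omega>))"
  shows "AE \<omega> in M. (\<Sum>i\<in>S \<omega>. g i \<omega>) = (\<Sum>i\<in>{1..n} - S \<omega>. g i \<omega>) \<longrightarrow>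
           cond_exp_on_event M FX Ez tauhat \<omega> = cond_exp_on_event M FX Ez' tauhat \<omega>
         \<and> cond_var M FX (real_cond_exp M FXZ tauhat) \<omega> = 0
         \<and> real_cond_exp M FXZ tauhat \<omega> = tau \<omega>"
proof -
  note g_def = assms(1) and FX_def = assms(2) and FXZ_def = assms(3) and tauhat_def = assms(4)
    and tau_def = assms(5) and Ez_def = assms(6) and Ez'_def = assms(7)
  have PS: "prob_space M" and n1: "n \<ge> 1" using assms(8,9) by auto
  interpret prob_space M by (rule PS)
  define V where "V = (\<lambda>i \<omega>. (Y1 i \<omega>, Y0 i \<omega>, X i \<omega>))"
  define Vall where "Vall = (\<lambda>\<omega>. \<lambda>i\<in>{1..n}. V i \<omega>)"
  define N where "N = vimage_algebra (space M) Vall (PiM {1..n} (\<lambda>_. borel))"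
  define ZA where "ZA = vimage_algebra (space M) Zs (count_space UNIV)"
  have indZN: "indep_set (sets ZA) (sets N)" using Zs_indep unfolding ZA_def N_def Vall_def V_def .
  have spZA: "space ZA = space M" "space N = space M" by (simp_all add: ZA_def N_def)
  have ZAM: "sets ZA \<subseteq> sets M" and NM: "sets N \<subseteq> sets M" using indZN indep_sets2_eq by auto
  have rv: "V i \<in> borel_measurable M" if "i \<in> {1..n}" for i
    using iid_indep that unfolding indep_vars_def2 V_def by auto
  have Y1I: "integrable M (Y1 i)" and Y0I: "integrable M (Y0 i)" if "i \<in> {1..n}" for i
    using finite_means that by auto
  have Y1M: "Y1 i \<in> borel_measurable M" and Y0M: "Y0 i \<in> borel_measurable M" if "i \<in> {1..n}" for i
    using Y1I[OF that] Y0I[OF that] by auto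
  have XM: "X i \<in> borel_measurable M" if "i \<in> {1..n}" for i
    using measurable_compose[OF rv[OF that] snd_snd_borel] by (simp add: V_def comp_def)
  have fst_b: "(\<lambda>p::real \<times> real \<times> (real ^ 'd). fst p) \<in> borel_measurable borel"
    by (intro borel_measurable_continuous_onI continuous_intros)
  have fst_snd_b: "(\<lambda>p::real \<times> real \<times> (real ^ 'd). fst (snd p)) \<in> borel_measurable borel"
    by (intro borel_measurable_continuous_onI continuous_intros)
  have VallN: "Vall \<in> measurable N (PiM {1..n} (\<lambda>_. borel))"
    unfolding N_def by (rule measurable_vimage_algebra1) (auto simp: Vall_def space_PiM)
  have VN: "V i \<in> measurable N borel" if "i \<in> {1..n}" for i
  proof -
    have "(\<lambda>\<omega>. Vall \<omega> i) \<in> measurable N borel"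
      using measurable_compose[OF VallN measurable_component_singleton[OF that]] by (simp add: comp_def)
    then show ?thesis using that by (simp add: Vall_def)
  qed
  have Y1N: "Y1 i \<in> borel_measurable N" and Y0N: "Y0 i \<in> borel_measurable N"
    and XN: "X i \<in> borel_measurable N" if "i \<in> {1..n}" for i
    using measurable_compose[OF VN[OF that] fst_b] measurable_compose[OF VN[OF that] fst_snd_b]
      measurable_compose[OF VN[OF that] snd_snd_borel] by (simp_all add: V_def comp_def)
  have gX: "gen_sets M X borel {1..n} \<subseteq> sets M" by (rule gen_sets_sets) (use XM in auto)
  have sFX: "sigma_finite_subalgebra M FX" unfolding FX_def sigma_gen_def by (rule sfs_sigma[OF PS gX])
  have spFX: "space FX = space M" unfolding FX_def by simp
  have FXN: "sets FX \<subseteq> sets N"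
  proof -
    have "gen_sets M X borel {1..n} \<subseteq> sets N"
    proof
      fix a assume "a \<in> gen_sets M X borel {1..n}"
      then obtain i A where iA: "i \<in> {1..n}" "A \<in> sets borel" "a = X i -` A \<inter> space M"
        unfolding gen_sets_def by auto
      show "a \<in> sets N" using measurable_sets[OF XN[OF iA(1)] iA(2)] iA(3) spZA by simp
    qed
    then show ?thesis unfolding FX_def sets_sigma_gen using sets.sigma_sets_subset[of _ N] spZA by simp
  qed
  have subNFX: "subalgebra N FX" using FXN spFX spZA by (simp add: subalgebra_def)
  have FXtoN: "f \<in> borel_measurable N" if "f \<in> borel_measurable FX" for f :: "'a \<Rightarrow> real"
    by (rule measurable_from_subalg[OF subNFX that])
  have subMFX: "subalgebra M FX" using sFX by (simp add: sigma_finite_subalgebra_def)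
  have FXtoM: "f \<in> borel_measurable M" if "f \<in> borel_measurable FX" for f :: "'a \<Rightarrow> real"
    by (rule measurable_from_subalg[OF subMFX that])
  define Si where "Si = (\<lambda>i. {\<omega> \<in> space M. i \<in> S \<omega>})"
  define s where "s = (\<lambda>i. indicator (Si i) :: 'a \<Rightarrow> real)"
  define s' where "s' = (\<lambda>i. indicator (space M - Si i) :: 'a \<Rightarrow> real)"
  have SiFX: "Si i \<in> sets FX" "space M - Si i \<in> sets FX" if "i \<in> {1..n}" for i
    using S_meas that sets.compl_sets[of "Si i" FX] spFX unfolding Si_def by auto
  have sFXm: "s i \<in> borel_measurable FX" "s' i \<in> borel_measurable FX" if "i \<in> {1..n}" for i
    unfolding s_def s'_def using SiFX[OF that] by auto
  have SiM: "Si i \<in> sets M" "space M - Si i \<in> sets M" if "i \<in> {1..n}" for i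
    using SiFX[OF that] subMFX by (auto simp: subalgebra_def)
  define Z where "Z = {\<omega> \<in> space M. Zs \<omega>}"
  have ZZA: "Z \<in> sets ZA" "space M - Z \<in> sets ZA"
  proof -
    have "Zs -` {True} \<inter> space M \<in> sets ZA" unfolding ZA_def by (rule in_vimage_algebra) simp
    moreover have "Zs -` {True} \<inter> space M = Z" unfolding Z_def by auto
    ultimately show "Z \<in> sets ZA" by simp
    have "Zs -` {False} \<inter> space M \<in> sets ZA" unfolding ZA_def by (rule in_vimage_algebra) simp
    moreover have "Zs -` {False} \<inter> space M = space M - Z" unfolding Z_def by auto
    ultimately show "space M - Z \<in> sets ZA" by simp
  qed
  have ZM: "Z \<in> sets M" "space M - Z \<in> sets M" using ZZA ZAM by auto
  have probZ: "measure M Z = 1/2" "measure M (space M - Z) = 1/2"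
    using Zs_bern prob_compl[OF ZM(1)] unfolding Z_def by auto
  have EzZ: "Ez = Z" and Ez'Z: "Ez' = space M - Z"
  proof -
    have 1: "(1::nat) \<in> {1..n}" using n1 by simp
    show "Ez = Z" unfolding Ez_def Z_def design_Z_def
    proof (intro set_eqI iffI)
      fix x assume "x \<in> {\<omega> \<in> space M. \<forall>i\<in>{1..n}. (if Zs \<omega> then of_bool (i \<in> S \<omega>) else 1 - of_bool (i \<in> S \<omega>)) = (of_bool (i \<in> S \<omega>) :: real)}"
      then have "x \<in> space M" "(if Zs x then of_bool (1 \<in> S x) else 1 - of_bool (1 \<in> S x)) = (of_bool (1 \<in> S x) :: real)"
        using 1 by auto
      then show "x \<in> {\<omega> \<in> space M. Zs \<omega>}" by (cases "1 \<in> S x") (auto split: if_splits)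
    qed auto
    show "Ez' = space M - Z" unfolding Ez'_def Z_def design_Z_def
    proof (intro set_eqI iffI)
      fix x assume "x \<in> {\<omega> \<in> space M. \<forall>i\<in>{1..n}. (if Zs \<omega> then of_bool (i \<in> S \<omega>) else 1 - of_bool (i \<in> S \<omega>)) = 1 - (of_bool (i \<in> S \<omega>) :: real)}"
      then have "x \<in> space M" "(if Zs x then of_bool (1 \<in> S x) else 1 - of_bool (1 \<in> S x)) = 1 - (of_bool (1 \<in> S x) :: real)"
        using 1 by auto
      then show "x \<in> space M - {\<omega> \<in> space M. Zs \<omega>}" by (cases "1 \<in> S x") (auto split: if_splits)
    qed auto
  qed
  define T1 where "T1 = (\<lambda>\<omega>. 2 / real n * (\<Sum>i=1..n. s i \<omega> * Y1 i \<omega> - s' i \<omega> * Y0 i \<omega>))"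
  define T0 where "T0 = (\<lambda>\<omega>. 2 / real n * (\<Sum>i=1..n. s' i \<omega> * Y1 i \<omega> - s i \<omega> * Y0 i \<omega>))"
  have tauhat_eq: "tauhat \<omega> = (if Zs \<omega> then T1 \<omega> else T0 \<omega>)" if "\<omega> \<in> space M" for \<omega>
  proof (cases "Zs \<omega>")
    case True
    have "tauhat \<omega> = T1 \<omega>" unfolding tauhat_def tau_hat_def T1_def
      by (intro arg_cong[where f="\<lambda>t. 2 / real n * t"] sum.cong)
         (use True that in \<open>auto simp: obs_Y_def design_Z_def s_def s'_def Si_def\<close>)
    then show ?thesis using True by simp
  next
    case False
    have "tauhat \<omega> = T0 \<omega>" unfolding tauhat_def tau_hat_def T0_def
      by (intro arg_cong[where f="\<lambda>t. 2 / real n * t"] sum.cong)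
         (use False that in \<open>auto simp: obs_Y_def design_Z_def s_def s'_def Si_def\<close>)
    then show ?thesis using False by simp
  qed
  have sY: "integrable M (\<lambda>\<omega>. s i \<omega> * Y1 i \<omega>)" "integrable M (\<lambda>\<omega>. s' i \<omega> * Y1 i \<omega>)"
     "integrable M (\<lambda>\<omega>. s i \<omega> * Y0 i \<omega>)" "integrable M (\<lambda>\<omega>. s' i \<omega> * Y0 i \<omega>)" if "i \<in> {1..n}" for i
    using integrable_mult_indicator[OF SiM(1)[OF that] Y1I[OF that]] integrable_mult_indicator[OF SiM(2)[OF that] Y1I[OF that]]
      integrable_mult_indicator[OF SiM(1)[OF that] Y0I[OF that]] integrable_mult_indicator[OF SiM(2)[OF that] Y0I[OF that]]
    by (simp_all add: s_def s'_def)
  have T1I: "integrable M T1" unfolding T1_def by (rule int_lin) (auto intro: sY)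
  have T0I: "integrable M T0" unfolding T0_def by (rule int_lin) (auto intro: sY)
  have sN: "s i \<in> borel_measurable N" "s' i \<in> borel_measurable N" if "i \<in> {1..n}" for i
    by (rule FXtoN[OF sFXm(1)[OF that]], rule FXtoN[OF sFXm(2)[OF that]])
  have T1N: "T1 \<in> borel_measurable N" unfolding T1_def by (rule meas_lin) (auto intro: sN Y1N Y0N)
  have T0N: "T0 \<in> borel_measurable N" unfolding T0_def by (rule meas_lin) (auto intro: sN Y1N Y0N)
  define cT1 where "cT1 = real_cond_exp M FX T1"
  define cT0 where "cT0 = real_cond_exp M FX T0"
  have cTI: "integrable M cT1" "integrable M cT0"
    unfolding cT1_def cT0_def
    by (rule sigma_finite_subalgebra.real_cond_exp_int(1)[OF sFX T1I], rule sigma_finite_subalgebra.real_cond_exp_int(1)[OF sFX T0I])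
  have cTFX: "cT1 \<in> borel_measurable FX" "cT0 \<in> borel_measurable FX" unfolding cT1_def cT0_def by simp_all
  have cTN: "cT1 \<in> borel_measurable N" "cT0 \<in> borel_measurable N"
    by (rule FXtoN[OF cTFX(1)], rule FXtoN[OF cTFX(2)])
  have cTM: "cT1 \<in> borel_measurable M" "cT0 \<in> borel_measurable M" unfolding cT1_def cT0_def by simp_all

  have one: "AE x in M. real_cond_exp M FX (\<lambda>x. 1) x = 1"
    by (rule sigma_finite_subalgebra.real_cond_exp_F_meas[OF sFX]) auto
  have C1: "AE x in M. cond_exp_on_event M FX Ez tauhat x = cT1 x"
  proof -
    have e1: "(\<lambda>x. indicator Z x * tauhat x) = (\<lambda>x. indicator Z x * T1 x)"
      using tauhat_eq by (auto simp: Z_def indicator_def)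
    have e2: "(indicator Z :: 'a \<Rightarrow> real) = (\<lambda>x. indicator Z x * 1)" by simp
    have a1: "AE x in M. real_cond_exp M FX (\<lambda>x. indicator Z x * T1 x) x = measure M Z * cT1 x"
      unfolding cT1_def by (rule indep_cond[OF PS sFX indZN spZA FXN ZZA(1) T1I T1N])
    have a2: "AE x in M. real_cond_exp M FX (indicator Z) x = measure M Z * real_cond_exp M FX (\<lambda>x. 1) x"
      using indep_cond[OF PS sFX indZN spZA FXN ZZA(1), of "\<lambda>x. 1"] by simp
    show ?thesis using a1 a2 one unfolding cond_exp_on_event_def EzZ e1
      by eventually_elim (rule aux_div; simp add: probZ)
  qed
  have C0: "AE x in M. cond_exp_on_event M FX Ez' tauhat x = cT0 x"
  proof -
    have e1: "(\<lambda>x. indicator (space M - Z) x * tauhat x) = (\<lambda>x. indicator (space M - Z) x * T0 x)"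
      using tauhat_eq by (auto simp: Z_def indicator_def)
    have e2: "(indicator (space M - Z) :: 'a \<Rightarrow> real) = (\<lambda>x. indicator (space M - Z) x * 1)" by simp
    have a1: "AE x in M. real_cond_exp M FX (\<lambda>x. indicator (space M - Z) x * T0 x) x = measure M (space M - Z) * cT0 x"
      unfolding cT0_def by (rule indep_cond[OF PS sFX indZN spZA FXN ZZA(2) T0I T0N])
    have a2: "AE x in M. real_cond_exp M FX (indicator (space M - Z)) x = measure M (space M - Z) * real_cond_exp M FX (\<lambda>x. 1) x"
      using indep_cond[OF PS sFX indZN spZA FXN ZZA(2), of "\<lambda>x. 1"] by simp
    show ?thesis using a1 a2 one unfolding cond_exp_on_event_def Ez'Z e1
      by eventually_elim (rule aux_div; simp add: probZ)
  qed

  have dZ_eq: "design_Z Zs S i \<omega> = indicator Z \<omega> * s i \<omega> + indicator (space M - Z) \<omega> * s' i \<omega>"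
    if "\<omega> \<in> space M" for i \<omega>
    using that by (auto simp: design_Z_def Z_def s_def s'_def Si_def indicator_def)
  have dZM: "design_Z Zs S i \<in> borel_measurable M" if "i \<in> {1..n}" for i
  proof -
    have m: "(\<lambda>\<omega>. indicator Z \<omega> * s i \<omega> + indicator (space M - Z) \<omega> * s' i \<omega>) \<in> borel_measurable M"
      using ZM FXtoM[OF sFXm(1)[OF that]] FXtoM[OF sFXm(2)[OF that]] by measurable
    show ?thesis by (rule measurable_cong[THEN iffD2, OF dZ_eq m])
  qed
  define G1 where "G1 = gen_sets M X borel {1..n}"
  define G2 where "G2 = gen_sets M (design_Z Zs S) borel {1..n}"
  have G2M: "G2 \<subseteq> sets M" unfolding G2_def by (rule gen_sets_sets) (use dZM in auto)
  have GP: "G1 \<union> G2 \<subseteq> Pow (space M)" unfolding G1_def G2_def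
    by (rule Un_least[OF gen_sets_Pow gen_sets_Pow])
  have sFXZ: "sigma_finite_subalgebra M FXZ" unfolding FXZ_def
    by (rule sfs_sigma[OF PS]) (use gX G2M in \<open>auto simp: G1_def G2_def\<close>)
  have sets_FXZ: "sets FXZ = sigma_sets (space M) (G1 \<union> G2)"
    unfolding FXZ_def G1_def G2_def using GP[unfolded G1_def G2_def] by simp
  have spFXZ: "space FXZ = space M"
    unfolding FXZ_def using GP[unfolded G1_def G2_def] by (simp add: space_measure_of_conv)
  have FX_FXZ: "sets FX \<subseteq> sets FXZ" unfolding FX_def sets_sigma_gen sets_FXZ G1_def
    by (rule sigma_sets_subseteq) auto
  have subFXZ: "subalgebra FXZ FX" using FX_FXZ spFX spFXZ by (simp add: subalgebra_def)
  have FXtoFXZ: "f \<in> borel_measurable FXZ" if "f \<in> borel_measurable FX" for f :: "'a \<Rightarrow> real"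
    by (rule measurable_from_subalg[OF subFXZ that])
  have n1': "(1::nat) \<in> {1..n}" using n1 by simp
  have ZFXZ: "Z \<in> sets FXZ" "space M - Z \<in> sets FXZ"
  proof -
    have a1: "design_Z Zs S 1 -` {1} \<inter> space M \<in> G2" unfolding G2_def gen_sets_def
      by (intro UN_I[OF n1'] CollectI exI[of _ "{1}"]) auto
    have a0: "design_Z Zs S 1 -` {0} \<inter> space M \<in> G2" unfolding G2_def gen_sets_def
      by (intro UN_I[OF n1'] CollectI exI[of _ "{0}"]) auto
    have a: "design_Z Zs S 1 -` {1} \<inter> space M \<in> sets FXZ" "design_Z Zs S 1 -` {0} \<inter> space M \<in> sets FXZ"
      using a1 a0 unfolding sets_FXZ by auto
    have b: "Si 1 \<in> sets FXZ" "space M - Si 1 \<in> sets FXZ" using SiFX[OF n1'] FX_FXZ by auto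
    have eqZ: "Z = ((design_Z Zs S 1 -` {1} \<inter> space M) \<inter> Si 1) \<union> ((design_Z Zs S 1 -` {0} \<inter> space M) \<inter> (space M - Si 1))"
      by (auto simp: Z_def design_Z_def Si_def of_bool_def split: if_splits)
    have c1: "(design_Z Zs S 1 -` {1} \<inter> space M) \<inter> Si 1 \<in> sets FXZ" by (rule sets.Int[OF a(1) b(1)])
    have c2: "(design_Z Zs S 1 -` {0} \<inter> space M) \<inter> (space M - Si 1) \<in> sets FXZ" by (rule sets.Int[OF a(2) b(2)])
    show "Z \<in> sets FXZ" unfolding eqZ by (rule sets.Un[OF c1 c2])
    then show "space M - Z \<in> sets FXZ" using sets.compl_sets[of Z FXZ] spFXZ by simp
  qed
  have DEC: "\<exists>A' B'. A' \<in> sets FX \<and> B' \<in> sets FX \<and> A = (A' \<inter> Z) \<union> (B' \<inter> (space M - Z))"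
    if "A \<in> sets FXZ" for A
  proof -
    have "A \<in> sigma_sets (space M) (G1 \<union> G2)" using that sets_FXZ by simp
    then show ?thesis
    proof (induction rule: sigma_sets.induct)
      case (Basic a)
      then show ?case
      proof
        assume "a \<in> G1"
        then have aFX: "a \<in> sets FX" unfolding FX_def sets_sigma_gen G1_def by auto
        then have "a \<subseteq> space M" using sets.sets_into_space[OF aFX] spFX by simp
        then show ?thesis using aFX by (intro exI[of _ a] exI[of _ a]) (auto simp: Z_def)
      next
        assume "a \<in> G2"
        then obtain i U where iU: "i \<in> {1..n}" "U \<in> sets borel" "a = design_Z Zs S i -` U \<inter> space M"
          unfolding G2_def gen_sets_def by auto
        have A'FX: "s i -` U \<inter> space M \<in> sets FX"
          using measurable_sets[OF sFXm(1)[OF iU(1)] iU(2)] spFX by simp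
        have B'FX: "s' i -` U \<inter> space M \<in> sets FX"
          using measurable_sets[OF sFXm(2)[OF iU(1)] iU(2)] spFX by simp
        have "a = ((s i -` U \<inter> space M) \<inter> Z) \<union> ((s' i -` U \<inter> space M) \<inter> (space M - Z))"
          unfolding iU(3) by (auto simp: Z_def dZ_eq indicator_def of_bool_def split: if_splits)
        then show ?thesis using A'FX B'FX by blast
      qed
    next
      case Empty
      show ?case by (intro exI[of _ "{}"]) auto
    next
      case (Compl a)
      then obtain A' B' where AB: "A' \<in> sets FX" "B' \<in> sets FX" "a = (A' \<inter> Z) \<union> (B' \<inter> (space M - Z))"
        by blast
      have "space M - A' \<in> sets FX" "space M - B' \<in> sets FX"
        using AB(1,2) sets.compl_sets[of _ FX] spFX by auto
      moreover have "space M - a = ((space M - A') \<inter> Z) \<union> ((space M - B') \<inter> (space M - Z))"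
        using AB(3) by (auto simp: Z_def)
      ultimately show ?case by blast
    next
      case (Union a)
      then have "\<forall>i. \<exists>A'. \<exists>B'. A' \<in> sets FX \<and> B' \<in> sets FX \<and> a i = (A' \<inter> Z) \<union> (B' \<inter> (space M - Z))"
        by blast
      from choice[OF this] obtain fA where
        "\<forall>i. \<exists>B'. fA i \<in> sets FX \<and> B' \<in> sets FX \<and> a i = (fA i \<inter> Z) \<union> (B' \<inter> (space M - Z))" by blast
      from choice[OF this] obtain fB where
        fAB: "\<forall>i. fA i \<in> sets FX \<and> fB i \<in> sets FX \<and> a i = (fA i \<inter> Z) \<union> (fB i \<inter> (space M - Z))" by blast
      have "range fA \<subseteq> sets FX" "range fB \<subseteq> sets FX" using fAB by auto
      then have "(\<Union>i. fA i) \<in> sets FX" "(\<Union>i. fB i) \<in> sets FX" by (auto intro: sets.countable_nat_UN)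
      moreover have "(\<Union>i. a i) = ((\<Union>i. fA i) \<inter> Z) \<union> ((\<Union>i. fB i) \<inter> (space M - Z))" using fAB by auto
      ultimately show ?case by blast
    qed
  qed
  define W where "W = (\<lambda>\<omega>. indicator Z \<omega> * cT1 \<omega> + indicator (space M - Z) \<omega> * cT0 \<omega>)"
  have iZ1: "integrable M (\<lambda>x. indicator Z x * cT1 x)" "integrable M (\<lambda>x. indicator (space M - Z) x * cT0 x)"
    using integrable_mult_indicator[OF ZM(1) cTI(1)] integrable_mult_indicator[OF ZM(2) cTI(2)] by simp_all
  have WI: "integrable M W" unfolding W_def by (rule Bochner_Integration.integrable_add[OF iZ1])
  have WFXZ: "W \<in> borel_measurable FXZ" unfolding W_def
    using ZFXZ FXtoFXZ[OF cTFX(1)] FXtoFXZ[OF cTFX(2)] by measurable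
  have WM: "W \<in> borel_measurable M" using WI by auto
  have tauhat_eq2: "tauhat \<omega> = indicator Z \<omega> * T1 \<omega> + indicator (space M - Z) \<omega> * T0 \<omega>"
    if "\<omega> \<in> space M" for \<omega>
    using tauhat_eq[OF that] that by (auto simp: Z_def)
  have iT: "integrable M (\<lambda>x. indicator Z x * T1 x)" "integrable M (\<lambda>x. indicator (space M - Z) x * T0 x)"
    using integrable_mult_indicator[OF ZM(1) T1I] integrable_mult_indicator[OF ZM(2) T0I] by simp_all
  have tauhatI: "integrable M tauhat"
  proof -
    have "integrable M tauhat \<longleftrightarrow> integrable M (\<lambda>\<omega>. indicator Z \<omega> * T1 \<omega> + indicator (space M - Z) \<omega> * T0 \<omega>)"
      by (rule Bochner_Integration.integrable_cong) (auto simp: tauhat_eq2)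
    then show ?thesis using Bochner_Integration.integrable_add[OF iT] by simp
  qed
  have int3: "integrable M (\<lambda>x. indicator Z' x * (indicator A'' x * h x))"
    if "Z' \<in> sets M" "A'' \<in> sets M" "integrable M h" for Z' A'' and h :: "'a \<Rightarrow> real"
    using integrable_mult_indicator[OF that(1) integrable_mult_indicator[OF that(2) that(3)]] by simp
  have CXZ: "AE x in M. real_cond_exp M FXZ tauhat x = W x"
  proof (rule sigma_finite_subalgebra.real_cond_exp_charact[OF sFXZ _ tauhatI WI WFXZ])
    fix A assume A: "A \<in> sets FXZ"
    obtain A' B' where AB: "A' \<in> sets FX" "B' \<in> sets FX" "A = (A' \<inter> Z) \<union> (B' \<inter> (space M - Z))"
      using DEC[OF A] by blast
    have A'N: "A' \<in> sets N" "B' \<in> sets N" using AB FXN by auto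
    have A'M: "A' \<in> sets M" "B' \<in> sets M" using A'N NM by auto
    have i1: "set_lebesgue_integral M A tauhat = (\<integral>x. indicator Z x * (indicator A' x * T1 x)
         + indicator (space M - Z) x * (indicator B' x * T0 x) \<partial>M)"
      unfolding set_lebesgue_integral_def
      by (intro Bochner_Integration.integral_cong) (auto simp: AB(3) tauhat_eq Z_def indicator_def)
    have i2: "set_lebesgue_integral M A W = (\<integral>x. indicator Z x * (indicator A' x * cT1 x)
         + indicator (space M - Z) x * (indicator B' x * cT0 x) \<partial>M)"
      unfolding set_lebesgue_integral_def W_def
      by (intro Bochner_Integration.integral_cong) (auto simp: AB(3) Z_def indicator_def)
    have j1: "(\<integral>x. indicator A' x * T1 x \<partial>M) = (\<integral>x. indicator A' x * cT1 x \<partial>M)"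
      using sigma_finite_subalgebra.real_cond_exp_intA[OF sFX T1I AB(1)]
      unfolding set_lebesgue_integral_def cT1_def by simp
    have j0: "(\<integral>x. indicator B' x * T0 x \<partial>M) = (\<integral>x. indicator B' x * cT0 x \<partial>M)"
      using sigma_finite_subalgebra.real_cond_exp_intA[OF sFX T0I AB(2)]
      unfolding set_lebesgue_integral_def cT0_def by simp
    have "set_lebesgue_integral M A tauhat = (\<integral>x. indicator Z x * (indicator A' x * T1 x) \<partial>M)
        + (\<integral>x. indicator (space M - Z) x * (indicator B' x * T0 x) \<partial>M)"
      unfolding i1 by (rule Bochner_Integration.integral_add[OF int3[OF ZM(1) A'M(1) T1I] int3[OF ZM(2) A'M(2) T0I]])
    also have "\<dots> = measure M Z * (\<integral>x. indicator A' x * T1 x \<partial>M) + measure M (space M - Z) * (\<integral>x. indicator B' x * T0 x \<partial>M)"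
      using indep_mul[OF PS indZN spZA ZZA(1) A'N(1) T1I T1N] indep_mul[OF PS indZN spZA ZZA(2) A'N(2) T0I T0N]
      by simp
    also have "\<dots> = measure M Z * (\<integral>x. indicator A' x * cT1 x \<partial>M) + measure M (space M - Z) * (\<integral>x. indicator B' x * cT0 x \<partial>M)"
      using j1 j0 by simp
    also have "\<dots> = (\<integral>x. indicator Z x * (indicator A' x * cT1 x) \<partial>M)
        + (\<integral>x. indicator (space M - Z) x * (indicator B' x * cT0 x) \<partial>M)"
      using indep_mul[OF PS indZN spZA ZZA(1) A'N(1) cTI(1) cTN(1)] indep_mul[OF PS indZN spZA ZZA(2) A'N(2) cTI(2) cTN(2)]
      by simp
    also have "\<dots> = set_lebesgue_integral M A W"
      unfolding i2 by (rule Bochner_Integration.integral_add[OF int3[OF ZM(1) A'M(1) cTI(1)] int3[OF ZM(2) A'M(2) cTI(2)], symmetric])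
    finally show "set_lebesgue_integral M A tauhat = set_lebesgue_integral M A W" .
  qed
  define W' where "W' = real_cond_exp M FXZ tauhat"
  have W'M: "W' \<in> borel_measurable M" unfolding W'_def by simp
  have CXZ': "AE x in M. W' x = W x" using CXZ unfolding W'_def .
  have EW: "AE x in M. real_cond_exp M FX W' x = real_cond_exp M FX W x"
    by (rule sigma_finite_subalgebra.real_cond_exp_cong[OF sFX CXZ' W'M WM])
  have EW2: "AE x in M. real_cond_exp M FX W x = 1/2 * cT1 x + 1/2 * cT0 x"
  proof -
    have a: "AE x in M. real_cond_exp M FX W x = real_cond_exp M FX (\<lambda>x. indicator Z x * cT1 x) x
        + real_cond_exp M FX (\<lambda>x. indicator (space M - Z) x * cT0 x) x"
      unfolding W_def by (rule sigma_finite_subalgebra.real_cond_exp_add[OF sFX iZ1])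
    have b1: "AE x in M. real_cond_exp M FX (\<lambda>x. indicator Z x * cT1 x) x = measure M Z * real_cond_exp M FX cT1 x"
      by (rule indep_cond[OF PS sFX indZN spZA FXN ZZA(1) cTI(1) cTN(1)])
    have b2: "AE x in M. real_cond_exp M FX (\<lambda>x. indicator (space M - Z) x * cT0 x) x = measure M (space M - Z) * real_cond_exp M FX cT0 x"
      by (rule indep_cond[OF PS sFX indZN spZA FXN ZZA(2) cTI(2) cTN(2)])
    have c1: "AE x in M. real_cond_exp M FX cT1 x = cT1 x"
      by (rule sigma_finite_subalgebra.real_cond_exp_F_meas[OF sFX cTI(1) cTFX(1)])
    have c2: "AE x in M. real_cond_exp M FX cT0 x = cT0 x"
      by (rule sigma_finite_subalgebra.real_cond_exp_F_meas[OF sFX cTI(2) cTFX(2)])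
    show ?thesis using a b1 b2 c1 c2 by eventually_elim (simp add: probZ)
  qed
  define cc where "cc = (\<lambda>x. ((cT1 x - cT0 x) / 2)\<^sup>2)"
  have CV: "AE x in M. cond_var M FX W' x = cc x"
    unfolding cond_var_def
  proof (rule rce_nonneg_F[OF sFX])
    show "(\<lambda>x. (W' x - real_cond_exp M FX W' x)\<^sup>2) \<in> borel_measurable M" using W'M by measurable
    show "cc \<in> borel_measurable FX" unfolding cc_def using cTFX by measurable
    show "\<And>x. 0 \<le> (W' x - real_cond_exp M FX W' x)\<^sup>2" by simp
    show "\<And>x. 0 \<le> cc x" unfolding cc_def by simp
    show "AE x in M. (W' x - real_cond_exp M FX W' x)\<^sup>2 = cc x"
      using CXZ' EW EW2 AE_space
    proof eventually_elim
      case (elim x)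
      show ?case
      proof (cases "x \<in> Z")
        case True
        then have "W x = cT1 x" unfolding W_def by simp
        then have d: "W' x - real_cond_exp M FX W' x = (cT1 x - cT0 x) / 2" using elim(1-3) by simp
        show ?thesis unfolding cc_def d ..
      next
        case False
        then have "W x = cT0 x" unfolding W_def using elim(4) by simp
        then have d: "W' x - real_cond_exp M FX W' x = - ((cT1 x - cT0 x) / 2)" using elim(1-3) by (simp add: field_simps)
        show ?thesis unfolding cc_def d by (rule power2_minus)
      qed
    qed
  qed

  define sg where "sg = (\<lambda>i. sigma_gen M X borel {i})"
  have sSG: "sigma_finite_subalgebra M (sg i)" if "i \<in> {1..n}" for i
    unfolding sg_def sigma_gen_def by (rule sfs_sigma[OF PS gen_sets_sets]) (use XM that in auto)
  have VAm: "Y1 i \<in> borel_measurable (vimage_algebra (space M) (\<lambda>\<omega>. (Y1 i \<omega>, Y0 i \<omega>, X i \<omega>)) borel)"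
     "Y0 i \<in> borel_measurable (vimage_algebra (space M) (\<lambda>\<omega>. (Y1 i \<omega>, Y0 i \<omega>, X i \<omega>)) borel)"
    if "i \<in> {1..n}" for i
  proof -
    have v: "(\<lambda>\<omega>. (Y1 i \<omega>, Y0 i \<omega>, X i \<omega>)) \<in> measurable (vimage_algebra (space M) (\<lambda>\<omega>. (Y1 i \<omega>, Y0 i \<omega>, X i \<omega>)) borel) borel"
      by (rule measurable_vimage_algebra1) auto
    show "Y1 i \<in> borel_measurable (vimage_algebra (space M) (\<lambda>\<omega>. (Y1 i \<omega>, Y0 i \<omega>, X i \<omega>)) borel)"
      using measurable_compose[OF v fst_b] by (simp add: comp_def)
    show "Y0 i \<in> borel_measurable (vimage_algebra (space M) (\<lambda>\<omega>. (Y1 i \<omega>, Y0 i \<omega>, X i \<omega>)) borel)"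
      using measurable_compose[OF v fst_snd_b] by (simp add: comp_def)
  qed
  define m1 where "m1 = (\<lambda>i. real_cond_exp M (sg i) (Y1 i))"
  define m0 where "m0 = (\<lambda>i. real_cond_exp M (sg i) (Y0 i))"
  have KEYS: "AE x in M. \<forall>i\<in>{1..n}. real_cond_exp M FX (Y1 i) x = m1 i x \<and> real_cond_exp M FX (Y0 i) x = m0 i x
      \<and> g i x = m1 i x + m0 i x \<and> real_cond_exp M (sg i) (\<lambda>\<omega>. Y1 i \<omega> - Y0 i \<omega>) x = m1 i x - m0 i x"
  proof (rule AE_finite_allI[OF finite_atLeastAtMost])
    fix i assume i: "i \<in> {1..n}"
    have k1: "AE x in M. real_cond_exp M FX (Y1 i) x = m1 i x"
      unfolding FX_def m1_def sg_def by (rule key[OF PS iid_indep i Y1I[OF i] VAm(1)[OF i]])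
    have k0: "AE x in M. real_cond_exp M FX (Y0 i) x = m0 i x"
      unfolding FX_def m0_def sg_def by (rule key[OF PS iid_indep i Y0I[OF i] VAm(2)[OF i]])
    have ga: "AE x in M. g i x = m1 i x + m0 i x"
      unfolding g_def m1_def m0_def
      using sigma_finite_subalgebra.real_cond_exp_add[OF sSG[OF i] Y1I[OF i] Y0I[OF i]] unfolding sg_def by simp
    have td: "AE x in M. real_cond_exp M (sg i) (\<lambda>\<omega>. Y1 i \<omega> - Y0 i \<omega>) x = m1 i x - m0 i x"
      unfolding m1_def m0_def by (rule sigma_finite_subalgebra.real_cond_exp_diff[OF sSG[OF i] Y1I[OF i] Y0I[OF i]])
    show "AE x in M. real_cond_exp M FX (Y1 i) x = m1 i x \<and> real_cond_exp M FX (Y0 i) x = m0 i x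
      \<and> g i x = m1 i x + m0 i x \<and> real_cond_exp M (sg i) (\<lambda>\<omega>. Y1 i \<omega> - Y0 i \<omega>) x = m1 i x - m0 i x"
      using k1 k0 ga td by eventually_elim simp
  qed
  have E1: "AE x in M. cT1 x = 2 / real n * (\<Sum>i\<in>{1..n}. s i x * real_cond_exp M FX (Y1 i) x - s' i x * real_cond_exp M FX (Y0 i) x)"
    unfolding cT1_def T1_def
    by (rule rce_lin[OF sFX finite_atLeastAtMost]) (auto intro: sFXm Y1M Y0M sY)
  have E0: "AE x in M. cT0 x = 2 / real n * (\<Sum>i\<in>{1..n}. s' i x * real_cond_exp M FX (Y1 i) x - s i x * real_cond_exp M FX (Y0 i) x)"
    unfolding cT0_def T0_def
    by (rule rce_lin[OF sFX finite_atLeastAtMost]) (auto intro: sFXm Y1M Y0M sY)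
  show ?thesis
    using C1 C0 CXZ CV[unfolded W'_def] E1 E0 KEYS AE_space
  proof eventually_elim
    case (elim x)
    have xM: "x \<in> space M" using elim(8) .
    have SxI: "S x \<subseteq> {1..n}" using S_opt xM by auto
    have sx: "s i x = (if i \<in> S x then 1 else 0)" "s' i x = (if i \<in> S x then 0 else 1)" for i
      using xM by (auto simp: s_def s'_def Si_def indicator_def)
    have E1': "cT1 x = 2 / real n * (\<Sum>i\<in>{1..n}. (if i \<in> S x then 1 else 0) * m1 i x - (if i \<in> S x then 0 else 1) * m0 i x)"
      unfolding elim(5) using elim(7) by (intro arg_cong[where f="\<lambda>t. 2 / real n * t"] sum.cong) (auto simp: sx)
    have E0': "cT0 x = 2 / real n * (\<Sum>i\<in>{1..n}. (if i \<in> S x then 0 else 1) * m1 i x - (if i \<in> S x then 1 else 0) * m0 i x)"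
      unfolding elim(6) using elim(7) by (intro arg_cong[where f="\<lambda>t. 2 / real n * t"] sum.cong) (auto simp: sx)
    have tx: "tau x = 1 / real n * (\<Sum>i\<in>{1..n}. m1 i x - m0 i x)"
      unfolding tau_def using elim(7) by (intro arg_cong[where f="\<lambda>t. 1 / real n * t"] sum.cong) (auto simp: sg_def)
    show ?case
    proof
      assume bal: "(\<Sum>i\<in>S x. g i x) = (\<Sum>i\<in>{1..n} - S x. g i x)"
      have bal': "(\<Sum>i\<in>S x. m1 i x + m0 i x) = (\<Sum>i\<in>{1..n} - S x. m1 i x + m0 i x)"
      proof -
        have "(\<Sum>i\<in>S x. m1 i x + m0 i x) = (\<Sum>i\<in>S x. g i x)"
          using elim(7) SxI by (intro sum.cong) auto
        also have "\<dots> = (\<Sum>i\<in>{1..n} - S x. g i x)" by (rule bal)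
        also have "\<dots> = (\<Sum>i\<in>{1..n} - S x. m1 i x + m0 i x)"
          using elim(7) by (intro sum.cong) auto
        finally show ?thesis .
      qed
      note A = alg[OF finite_atLeastAtMost SxI bal']
      have eq10: "cT1 x = cT0 x" unfolding E1' E0' A(1) ..
      have eqt: "cT1 x = tau x" unfolding E1' tx A(2)[symmetric] by simp
      have Wx: "W x = cT1 x" unfolding W_def using eq10 xM by (cases "x \<in> Z") auto
      show "cond_exp_on_event M FX Ez tauhat x = cond_exp_on_event M FX Ez' tauhat x \<and>
          cond_var M FX (real_cond_exp M FXZ tauhat) x = 0 \<and> real_cond_exp M FXZ tauhat x = tau x"
        using elim(1-4) eq10 eqt Wx by (simp add: cc_def)
    qed
  qed
qed

end
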